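(* Let $p(\cdot)\in\mathcal{P}^{\log}_{0}(\mathbb{R}^{3})$ with $2\leq p^{-}\leq p(\cdot)\leq p^{+}\leq 6$, and $1\leq\rho\leq\infty$. Then there exists a positive constant $C$ such that for any $u_{0}\in F\dot{B}^{2-\frac{3}{p(\cdot)}}_{p(\cdot),1}(\mathbb{R}^{3})$, \[ \|e^{t\Delta}u_{0}\|_{\mathcal{X}_{t}}\leq C\|u_{0}\|_{F\dot{B}^{2-\frac{3}{p(\cdot)}}_{p(\cdot),1}}. \]
   Context: $e^{t\Delta}$ is the Fourier multiplier $e^{-t|\xi|^2}$. Fourier transform: $\widehat f(\xi)=(2\pi)^{-3/2}\int f(x)e^{-ix\cdot\xi}dx$. Let $\chi$ be a smooth radial non-increasing function supported in $B(0,\frac43)$ with $\chi\equiv1$ on $B(0,\frac34)$; $\varphi(\xi)=\chi(\xi/2)-\chi(\xi)$, $\varphi_j(\xi)=\varphi(2^{-j}\xi)$, $S_jf=\mathcal{F}^{-1}(\chi(2^{-j}\cdot)\widehat f)$; $\mathcal{S}'_h$ is the set of tempered distributions with $S_jf\to0$ as $j\to-\infty$. Constant exponents: $\|f\|_{F\dot B^s_{p,1}}=\sum_j2^{js}\|\varphi_j\widehat f\|_{L^p}$ and $\|f\|_{\mathcal{L}^\lambda_t(F\dot B^s_{p,1})}=\sum_j2^{js}\|\varphi_j\widehat f\|_{L^\lambda(0,\infty;L^p_\xi)}$. Variable exponents: $\mathcal{P}_0$ is the set of measurable $p:\mathbb{R}^3\to[1,\infty)$ with $1<p^-:=\operatorname{ess\,inf}p$,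 $p^+:=\operatorname{ess\,sup}p<\infty$; $\|f\|_{L^{p(\cdot)}}=\inf\{\lambda>0:\int|f/\lambda|^{p(x)}dx\le1\}$; $\mathcal{P}_0^{\log}$ is the set of $p\in\mathcal{P}_0$ such that $1/p_\infty=\lim_{|x|\to\infty}1/p(x)$ exists and for some $C$, $|1/p(x)-1/p(y)|\le C/\log(e+1/|x-y|)$ and $|1/p(x)-1/p_\infty|\le C/\log(e+|x|)$. For a function $s(\cdot)$: $\|f\|_{F\dot B^{s(\cdot)}_{p(\cdot),1}}=\sum_j\|2^{js(\cdot)}\varphi_j\widehat f\|_{L^{p(\cdot)}}$ and $\|f\|_{\mathcal{L}^\rho_t(F\dot B^{s(\cdot)}_{p(\cdot),1})}=\sum_j\|2^{js(\cdot)}\varphi_j\widehat f\|_{L^\rho(0,\infty;L^{p(\cdot)}_\xi)}$, with $2^{js(\cdot)}$ the function $\xi\mapsto 2^{js(\xi)}$. The space $\mathcal{X}_t=\mathcal{L}^{\rho}(0,\infty;F\dot{B}^{2-\frac{3}{p(\cdot)}+\frac{2}{\rho}}_{p(\cdot),1})\cap\mathcal{L}^{1}(0,\infty;F\dot{B}^{\frac{5}{2}}_{2,1})\cap\mathcal{L}^{\infty}(0,\infty;F\dot{B}^{\frac{1}{2}}_{2,1})$ with norm $\|u\|_{\mathcal{X}_t}=\max\{\|u\|_{\mathcal{L}^\rho_t(F\dot B^{2-\frac{3}{p(\cdot)}+\frac2\rho}_{p(\cdot),1})},\|u\|_{\mathcal{L}^1_t(F\dot B^{\frac52}_{2,1})},\|u\|_{\mathcal{L}^\infty_t(F\dot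 B^{\frac12}_{2,1})}\}$. *)

theory Defs
  imports "HOL-Analysis.Analysis"
begin

(* C^infinity functions on R^3: differentiable everywhere, and every directional
   derivative is again C^infinity (coinductively: derivatives of all orders exist). *)
coinductive smooth3 :: "(real^3 \<Rightarrow> real) \<Rightarrow> bool" where
  "f differentiable_on UNIV \<Longrightarrow> (\<And>v. smooth3 (\<lambda>x. frechet_derivative f (at x) v))
     \<Longrightarrow> smooth3 f"

definition admissible_chi :: "(real^3 \<Rightarrow> real) \<Rightarrow> bool" where
  "admissible_chi chi \<longleftrightarrow> smooth3 chi
     \<and> (\<exists>g. antimono g \<and> (\<forall>x. chi x = g (norm x)))
     \<and> (\<forall>x. norm x \<ge> 4/3 \<longrightarrow> chi x = 0)
     \<and> (\<forall>x. norm x \<le> 3/4 \<longrightarrow> chi x = 1)"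

definition phi_j :: "(real^3 \<Rightarrow> real) \<Rightarrow> int \<Rightarrow> real^3 \<Rightarrow> real" where
  "phi_j chi j \<xi> = (let \<eta> = (2 powr (- real_of_int j)) *\<^sub>R \<xi> in chi ((1/2) *\<^sub>R \<eta>) - chi \<eta>)"

definition ess_inf_exp :: "(real^3 \<Rightarrow> real) \<Rightarrow> ereal" where
  "ess_inf_exp p = Sup {c::ereal. AE x in lborel. c \<le> ereal (p x)}"

definition ess_sup_exp :: "(real^3 \<Rightarrow> real) \<Rightarrow> ereal" where
  "ess_sup_exp p = Inf {c::ereal. AE x in lborel. ereal (p x) \<le> c}"

definition P0 :: "(real^3 \<Rightarrow> real) \<Rightarrow> bool" where
  "P0 p \<longleftrightarrow> p \<in> borel_measurable lborel \<and> (\<forall>x. 1 \<le> p x)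
     \<and> 1 < ess_inf_exp p \<and> ess_sup_exp p < \<infinity>"

definition P0_log :: "(real^3 \<Rightarrow> real) \<Rightarrow> bool" where
  "P0_log p \<longleftrightarrow> P0 p \<and> (\<exists>q C::real.
       ((\<lambda>x. 1 / p x) \<longlongrightarrow> q) at_infinity
     \<and> (\<forall>x y. \<bar>1 / p x - 1 / p y\<bar> \<le> C / ln (exp 1 + 1 / norm (x - y)))
     \<and> (\<forall>x. \<bar>1 / p x - q\<bar> \<le> C / ln (exp 1 + norm x)))"

definition enn_powr :: "ennreal \<Rightarrow> real \<Rightarrow> ennreal" where
  "enn_powr x a = (if x = top then top else ennreal (enn2real x powr a))"

definition Lvar_norm :: "(real^3 \<Rightarrow> real) \<Rightarrow> (real^3 \<Rightarrow> complex) \<Rightarrow> ennreal" where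
  "Lvar_norm p f = Inf {ennreal lam | lam. lam > 0 \<and>
      (\<integral>\<^sup>+ x. ennreal ((norm (f x) / lam) powr p x) \<partial>lborel) \<le> 1}"

definition Lp_norm :: "real \<Rightarrow> (real^3 \<Rightarrow> complex) \<Rightarrow> ennreal" where
  "Lp_norm p f = enn_powr (\<integral>\<^sup>+ x. ennreal (norm (f x) powr p) \<partial>lborel) (1 / p)"

definition Lrho_time :: "ereal \<Rightarrow> (real \<Rightarrow> ennreal) \<Rightarrow> ennreal" where
  "Lrho_time \<rho> N = (if \<rho> = \<infinity> then Inf {c. AE t in lborel. 0 < t \<longrightarrow> N t \<le> c}
     else enn_powr (\<integral>\<^sup>+ t\<in>{0<..}. enn_powr (N t) (real_of_ereal \<rho>) \<partial>lborel)
                   (1 / real_of_ereal \<rho>))"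

(* heat semigroup on the Fourier side: (e^{t Delta} u)^ = e^{-t|xi|^2} u^ *)
definition heat_hat :: "real \<Rightarrow> (real^3 \<Rightarrow> complex) \<Rightarrow> real^3 \<Rightarrow> complex" where
  "heat_hat t F \<xi> = complex_of_real (exp (- t * (norm \<xi>)\<^sup>2)) * F \<xi>"

(* Norms expressed in terms of F = Fourier transform of the function. *)

definition FB_var_norm :: "(real^3 \<Rightarrow> real) \<Rightarrow> (real^3 \<Rightarrow> real) \<Rightarrow> (real^3 \<Rightarrow> real)
     \<Rightarrow> (real^3 \<Rightarrow> complex) \<Rightarrow> ennreal" where
  "FB_var_norm chi s p F = (\<Sum>\<^sub>\<infinity> j::int.
      Lvar_norm p (\<lambda>\<xi>. complex_of_real (2 powr (real_of_int j * s \<xi>) * phi_j chi j \<xi>) * F \<xi>))"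

definition LFB_var_norm :: "(real^3 \<Rightarrow> real) \<Rightarrow> ereal \<Rightarrow> (real^3 \<Rightarrow> real) \<Rightarrow> (real^3 \<Rightarrow> real)
     \<Rightarrow> (real \<Rightarrow> real^3 \<Rightarrow> complex) \<Rightarrow> ennreal" where
  "LFB_var_norm chi \<rho> s p Fhat = (\<Sum>\<^sub>\<infinity> j::int. Lrho_time \<rho> (\<lambda>t.
      Lvar_norm p (\<lambda>\<xi>. complex_of_real (2 powr (real_of_int j * s \<xi>) * phi_j chi j \<xi>) * Fhat t \<xi>)))"

definition LFB_norm :: "(real^3 \<Rightarrow> real) \<Rightarrow> ereal \<Rightarrow> real \<Rightarrow> real
     \<Rightarrow> (real \<Rightarrow> real^3 \<Rightarrow> complex) \<Rightarrow> ennreal" where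
  "LFB_norm chi lam s p Fhat = (\<Sum>\<^sub>\<infinity> j::int. ennreal (2 powr (real_of_int j * s)) *
      Lrho_time lam (\<lambda>t. Lp_norm p (\<lambda>\<xi>. complex_of_real (phi_j chi j \<xi>) * Fhat t \<xi>)))"

definition X_norm :: "(real^3 \<Rightarrow> real) \<Rightarrow> ereal \<Rightarrow> (real^3 \<Rightarrow> real)
     \<Rightarrow> (real \<Rightarrow> real^3 \<Rightarrow> complex) \<Rightarrow> ennreal" where
  "X_norm chi \<rho> p Fhat = max (LFB_var_norm chi \<rho> (\<lambda>\<xi>. 2 - 3 / p \<xi> + real_of_ereal (2 / \<rho>)) p Fhat)
      (max (LFB_norm chi 1 (5/2) 2 Fhat) (LFB_norm chi \<infinity> (1/2) 2 Fhat))"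

end

theory Submission
  imports Defs
begin


lemma Inf_scale:
  fixes X :: ennreal
  assumes c: "c > 0" and H: "\<And>l. P l \<Longrightarrow> X \<le> ennreal (c * l)"
  shows "X \<le> ennreal c * Inf {ennreal l | l. P l}"
proof -
  have "X / ennreal c \<le> Inf {ennreal l | l. P l}"
  proof (rule Inf_greatest, safe)
    fix l assume "P l"
    hence "X \<le> ennreal c * ennreal l" using H
      by (metis c ennreal_mult' less_imp_le) 
    thus "X / ennreal c \<le> ennreal l"
      by (simp add: divide_le_posI_ennreal c)
  qed
  hence "X / ennreal c * ennreal c \<le> Inf {ennreal l | l. P l} * ennreal c"
    by (rule mult_right_mono) simp
  moreover have "X / ennreal c * ennreal c = X"
    using c by (simp add: ennreal_divide_times)
  ultimately show ?thesis by (simp add: mult.commute)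
qed
lemma Lvar_scale:
  assumes p: "\<And>x. 0 \<le> p x" and k: "k > 0"
    and hg: "\<And>\<xi>. norm (h \<xi>) \<le> k * norm (g \<xi>)"
  shows "Lvar_norm p h \<le> ennreal k * Lvar_norm p g"
  unfolding Lvar_norm_def[of p g]
proof (rule Inf_scale[OF k])
  fix l assume l: "l > 0 \<and> (\<integral>\<^sup>+ x. ennreal ((norm (g x) / l) powr p x) \<partial>lborel) \<le> 1"
  have "(\<integral>\<^sup>+ x. ennreal ((norm (h x) / (k*l)) powr p x) \<partial>lborel)
        \<le> (\<integral>\<^sup>+ x. ennreal ((norm (g x) / l) powr p x) \<partial>lborel)"
  proof (rule nn_integral_mono)
    fix x
    have "norm (h x) / (k*l) \<le> norm (g x) / l"
      using hg[of x] k l by (simp add: divide_simps mult.commute mult.left_commute)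
    thus "ennreal ((norm (h x) / (k*l)) powr p x) \<le> ennreal ((norm (g x) / l) powr p x)"
      using p[of x] k l by (intro ennreal_leI powr_mono2) auto
  qed
  also have "\<dots> \<le> 1" using l by simp
  finally have "ennreal (k*l) \<in> {ennreal lam | lam. lam > 0 \<and>
      (\<integral>\<^sup>+ x. ennreal ((norm (h x) / lam) powr p x) \<partial>lborel) \<le> 1}"
    using k l by auto
  thus "Lvar_norm p h \<le> ennreal (k * l)"
    unfolding Lvar_norm_def by (rule Inf_lower)
qed



lemma ess_inf_AE:
  assumes "2 \<le> ess_inf_exp p"
  shows "AE x in lborel. 2 \<le> p x"
proof -
  have "\<forall>n::nat. AE x in lborel. ereal (2 - 1/(Suc n)) \<le> ereal (p x)"
  proof
    fix n :: nat
    have "ereal (2 - 1/(Suc n)) < Sup {c::ereal. AE x in lborel. c \<le> ereal (p x)}"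
      using assms unfolding ess_inf_exp_def
      by (rule less_le_trans[rotated]) simp
    then obtain c where "c \<in> {c::ereal. AE x in lborel. c \<le> ereal (p x)}" "ereal (2 - 1/(Suc n)) < c"
      by (auto simp: less_Sup_iff)
    thus "AE x in lborel. ereal (2 - 1/(Suc n)) \<le> ereal (p x)"
      by (auto elim!: eventually_mono dest: order.strict_trans2 simp del: ereal_less_eq)
  qed
  hence "AE x in lborel. \<forall>n::nat. 2 - 1/(Suc n) \<le> p x"
    by (simp add: AE_all_countable)
  thus ?thesis
  proof (rule eventually_mono)
    fix x assume H: "\<forall>n::nat. 2 - 1/(Suc n) \<le> p x"
    show "2 \<le> p x"
    proof (rule ccontr)
      assume "\<not> 2 \<le> p x"
      hence "0 < 2 - p x" by simp
      then obtain n :: nat where "1 / Suc n < 2 - p x"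
        using nat_approx_posE by blast
      with H[rule_format, of n] show False by simp
    qed
  qed
qed



lemma young_aux:
  fixes a u p :: real
  assumes a: "a > 0" and u: "u \<ge> 0" and p: "p \<ge> 2"
  shows "a powr (1 - 2/p) * u^2 \<le> u powr p + a"
proof (cases "u \<le> a powr (1/p)")
  case True
  have "u^2 \<le> (a powr (1/p))^2" using True u by (intro power_mono) auto
  also have "\<dots> = (a powr (1/p)) powr 2" by simp
  also have "\<dots> = a powr (2/p)" by (simp add: powr_powr)
  finally have "a powr (1 - 2/p) * u^2 \<le> a powr (1 - 2/p) * a powr (2/p)"
    by (intro mult_left_mono) auto
  also have "\<dots> = a" using a by (simp add: powr_add[symmetric])
  finally show ?thesis using u by (smt (verit) powr_ge_zero)
next
  case False
  hence u0: "u > 0" using a by (smt (verit) powr_gt_zero)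
  have "a = (a powr (1/p)) powr p" using p a by (simp add: powr_powr)
  have "a powr (1 - 2/p) = (a powr (1/p)) powr (p - 2)" using p a
    by (simp add: powr_powr diff_divide_distrib)
  also have "\<dots> \<le> u powr (p - 2)" using False p by (intro powr_mono2) auto
  finally have "a powr (1 - 2/p) * u^2 \<le> u powr (p - 2) * u^2"
    by (intro mult_right_mono) auto
  also have "\<dots> = u powr (p - 2) * u powr 2" using u0 by simp
  also have "\<dots> = u powr p" using u0 powr_add[of u "p - 2" 2] by simp
  finally show ?thesis using a by simp
qed



lemma enn_powr_mono:
  assumes "x \<le> ennreal y" "y \<ge> 0" "a \<ge> 0"
  shows "enn_powr x a \<le> ennreal (y powr a)"
proof -
  have "x < top" using assms(1) ennreal_less_top by (rule le_less_trans)
  hence xt: "x \<noteq> top" by simp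
  have "enn2real x \<le> enn2real (ennreal y)"
    using assms(1) by (rule enn2real_mono) simp
  hence "enn2real x \<le> y" using assms(2) by simp
  hence "enn2real x powr a \<le> y powr a"
    using assms by (intro powr_mono2) auto
  thus ?thesis unfolding enn_powr_def using xt by (simp add: ennreal_leI)
qed


lemma L2_bound:
  fixes p :: "real^3 \<Rightarrow> real" and g h :: "real^3 \<Rightarrow> complex"
  assumes pm: "p \<in> borel_measurable lborel" and p2: "AE \<xi> in lborel. 2 \<le> p \<xi>"
    and gm: "g \<in> borel_measurable lborel"
    and a: "a > 0" and k: "k > 0" and K: "K \<ge> 0"
    and hg: "\<And>\<xi>. norm (h \<xi>) \<le> k * (a powr (1/2 - 1/p \<xi>) * norm (g \<xi>))"
    and gA: "\<And>\<xi>. g \<xi> \<noteq> 0 \<Longrightarrow> \<xi> \<in> A" and Am: "A \<in> sets lborel"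
    and mA: "emeasure lborel A = ennreal m" and m: "m \<ge> 0" and amK: "a * m \<le> K"
  shows "Lp_norm 2 h \<le> ennreal (k * sqrt (1 + K)) * Lvar_norm p g"
proof -
  have pos: "k * sqrt (1+K) > 0" using k K by simp
  show ?thesis unfolding Lvar_norm_def[of p g]
  proof (rule Inf_scale[OF pos])
    fix l assume l: "l > 0 \<and> (\<integral>\<^sup>+ x. ennreal ((norm (g x) / l) powr p x) \<partial>lborel) \<le> 1"
    define u where "u x = norm (g x) / l" for x
    have u0: "u x \<ge> 0" for x using l by (simp add: u_def)
    have pw: "AE x in lborel. ennreal (norm (h x) powr 2)
               \<le> ennreal ((k*l)^2 * (u x powr p x + a * indicator A x))"
      using p2
    proof (rule eventually_mono)
      fix x assume px: "2 \<le> p x"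
      have "norm (h x) powr 2 = norm (h x)^2" by simp
      also have "\<dots> \<le> (k * (a powr (1/2 - 1/p x) * norm (g x)))^2"
        using hg[of x] by (intro power_mono) auto
      also have "\<dots> = (k*l)^2 * ((a powr (1/2 - 1/p x))^2 * u x ^2)"
        using l by (simp add: u_def power_mult_distrib power_divide)
      also have "(a powr (1/2 - 1/p x))^2 = a powr (1 - 2/p x)"
      proof -
        have "(a powr (1/2 - 1/p x))^2 = (a powr (1/2 - 1/p x)) powr 2" by simp
        also have "\<dots> = a powr (1 - 2/p x)" by (simp add: powr_powr algebra_simps)
        finally show ?thesis .
      qed
      also have "(k*l)^2 * (a powr (1 - 2/p x) * u x ^2) \<le> (k*l)^2 * (u x powr p x + a * indicator A x)"
      proof (cases "g x = 0")
        case True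
        thus ?thesis using a by (simp add: u_def)
      next
        case False
        hence "x \<in> A" by (rule gA)
        thus ?thesis using young_aux[OF a u0 px] by (intro mult_left_mono) auto
      qed
      finally show "ennreal (norm (h x) powr 2) \<le> ennreal ((k*l)^2 * (u x powr p x + a * indicator A x))"
        by (rule ennreal_leI)
    qed
    have um: "(\<lambda>x. u x powr p x) \<in> borel_measurable lborel"
      unfolding u_def using gm pm by measurable
    have "(\<integral>\<^sup>+ x. ennreal (norm (h x) powr 2) \<partial>lborel)
          \<le> (\<integral>\<^sup>+ x. ennreal ((k*l)^2 * (u x powr p x + a * indicator A x)) \<partial>lborel)"
      by (rule nn_integral_mono_AE[OF pw])
    also have "\<dots> = (\<integral>\<^sup>+ x. ennreal ((k*l)^2) * (ennreal (u x powr p x) + ennreal a * indicator A x) \<partial>lborel)"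
      using a u0 by (intro nn_integral_cong) (auto simp: ennreal_mult' split: split_indicator)
    also have "\<dots> = ennreal ((k*l)^2) * ((\<integral>\<^sup>+ x. ennreal (u x powr p x) \<partial>lborel) + ennreal a * emeasure lborel A)"
      using um Am by (simp add: nn_integral_cmult nn_integral_add nn_integral_cmult_indicator)
    also have "\<dots> \<le> ennreal ((k*l)^2) * (1 + ennreal K)"
    proof (intro mult_left_mono add_mono)
      show "(\<integral>\<^sup>+ x. ennreal (u x powr p x) \<partial>lborel) \<le> 1" using l by (simp add: u_def)
      show "ennreal a * emeasure lborel A \<le> ennreal K"
        using mA a m amK by (simp add: ennreal_mult[symmetric] ennreal_leI)
    qed auto
    also have "\<dots> = ennreal ((k*l)^2 * (1+K))"
      using K by (simp add: ennreal_mult')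
    finally have I: "(\<integral>\<^sup>+ x. ennreal (norm (h x) powr 2) \<partial>lborel) \<le> ennreal ((k*l)^2 * (1+K))" .
    have "Lp_norm 2 h \<le> ennreal (((k*l)^2 * (1+K)) powr (1/2))"
      unfolding Lp_norm_def by (rule enn_powr_mono[OF I]) (use K in auto)
    also have "((k*l)^2 * (1+K)) powr (1/2) = k * sqrt (1 + K) * l"
      using K k l by (simp add: powr_half_sqrt real_sqrt_mult)
    finally show "Lp_norm 2 h \<le> ennreal (k * sqrt (1 + K) * l)" .
  qed
qed



lemma real_factor:
  fixes r :: real and j :: int
  assumes r: "r \<ge> 1"
  shows "(9/16 * 2 powr (2*j) * r) powr (-1/r) \<le> 16/9 * 2 powr (- j * (2/r))"
proof -
  define c where "c = 9/16 * r"
  have c0: "c > 0" using r by (simp add: c_def)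
  have "(9/16 * 2 powr (2*j) * r) powr (-1/r) = c powr (-1/r) * (2 powr (2*j)) powr (-1/r)"
    unfolding c_def by (subst powr_mult[symmetric]) (auto simp: algebra_simps)
  also have "(2 powr (2*j)) powr (-1/r) = 2 powr (- j * (2/r))"
    by (simp add: powr_powr mult.commute)
  also have "c powr (-1/r) \<le> 16/9"
  proof (cases "c \<ge> 1")
    case True
    have "c powr (-1/r) \<le> c powr 0" using True r by (intro powr_mono) auto
    thus ?thesis using c0 by simp
  next
    case False
    have "c powr (-1/r) = (1/c) powr (1/r)" using c0 by (simp add: powr_divide powr_minus_divide)
    also have "\<dots> \<le> (1/c) powr 1" using False c0 r by (intro powr_mono) auto
    also have "\<dots> = 16 / (9*r)" using c0 by (simp add: c_def)
    also have "\<dots> \<le> 16/9" using r by (simp add: field_simps)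
    finally show ?thesis .
  qed
  hence "c powr (-1/r) * 2 powr (- j * (2/r)) \<le> 16/9 * 2 powr (- j * (2/r))"
    by (intro mult_right_mono) auto
  finally show ?thesis .
qed

lemma time_bound:
  fixes M :: "real \<Rightarrow> ennreal" and j :: int and \<rho> :: ereal
  assumes rho: "1 \<le> \<rho>" and b: "b \<ge> 0"
    and M: "\<And>t. t > 0 \<Longrightarrow> M t \<le> ennreal (exp (- (9/16 * 2 powr (2*j)) * t) * b)"
  shows "Lrho_time \<rho> M \<le> ennreal (16/9 * 2 powr (- j * real_of_ereal (2/\<rho>)) * b)"
proof (cases \<rho>)
  case PInf
  have "Lrho_time \<rho> M \<le> ennreal b"
    unfolding Lrho_time_def using PInf
  proof (simp, intro Inf_lower CollectI AE_I2 impI)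
    fix t :: real assume t: "0 < t"
    have "M t \<le> ennreal (exp (- (9/16 * 2 powr (2*j)) * t) * b)" using M[OF t] .
    also have "\<dots> \<le> ennreal b"
      using t b by (intro ennreal_leI mult_left_le_one_le) auto
    finally show "M t \<le> ennreal b" .
  qed
  also have "\<dots> \<le> ennreal (16/9 * 2 powr (- j * real_of_ereal (2/\<rho>)) * b)"
    using PInf b by (intro ennreal_leI) auto
  finally show ?thesis .
next
  case (real r)
  hence r: "r \<ge> 1" using rho by simp
  define q where "q = 9/16 * 2 powr (2*j)"
  have q0: "q > 0" by (simp add: q_def)
  have qr: "q * r > 0" using q0 r by simp
  have "(\<integral>\<^sup>+ t\<in>{0<..}. enn_powr (M t) r \<partial>lborel)
        \<le> (\<integral>\<^sup>+ t. ennreal (b powr r * exp (- (q*r) * t)) * indicator {0..} t \<partial>lborel)"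
  proof (rule nn_integral_mono)
    fix t :: real
    show "enn_powr (M t) r * indicator {0<..} t \<le> ennreal (b powr r * exp (- (q*r) * t)) * indicator {0..} t"
    proof (cases "t > 0")
      case True
      have "enn_powr (M t) r \<le> ennreal ((exp (- q * t) * b) powr r)"
        using M[OF True] b r by (intro enn_powr_mono) (auto simp: q_def)
      also have "(exp (- q * t) * b) powr r = b powr r * exp (- (q*r) * t)"
        using b by (simp add: powr_mult exp_powr_real algebra_simps)
      finally show ?thesis using True by simp
    qed simp
  qed
  also have "\<dots> = ennreal (b powr r * (exp (- (q*r) * 0) / (q*r)))"
    using qr by (intro nn_integral_has_integral_lebesgue' has_integral_mult_right
        has_integral_exp_minus_to_infinity) auto
  also have "\<dots> = ennreal (b powr r / (q*r))" by simp
  finally have I: "(\<integral>\<^sup>+ t\<in>{0<..}. enn_powr (M t) r \<partial>lborel) \<le> ennreal (b powr r / (q*r))" .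
  have L: "Lrho_time \<rho> M \<le> ennreal ((b powr r / (q*r)) powr (1/r))"
    unfolding Lrho_time_def using real r qr b by (simp add: enn_powr_mono[OF I])
  have "(b powr r / (q*r)) powr (1/r) = b * (q*r) powr (-1/r)"
    using b r qr by (simp add: powr_divide powr_powr powr_minus_divide)
  also have "\<dots> \<le> b * (16/9 * 2 powr (- j * (2/r)))"
    using real_factor[OF r, of j] b by (intro mult_left_mono) (auto simp: q_def)
  also have "\<dots> = 16/9 * 2 powr (- j * real_of_ereal (2/\<rho>)) * b" using real r by simp
  finally have R: "(b powr r / (q*r)) powr (1/r) \<le> 16/9 * 2 powr (- j * real_of_ereal (2/\<rho>)) * b" .
  show ?thesis by (rule order_trans[OF L ennreal_leI[OF R]])
next
  case MInf
  with rho show ?thesis by simp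
qed

lemma phi_supp:
  assumes chi: "admissible_chi chi" and ne: "phi_j chi j \<xi> \<noteq> 0"
  shows "3/4 * 2 powr j < norm \<xi> \<and> norm \<xi> < 8/3 * 2 powr j"
proof -
  define \<eta> where "\<eta> = (2 powr (- real_of_int j)) *\<^sub>R \<xi>"
  have ne': "chi ((1/2) *\<^sub>R \<eta>) - chi \<eta> \<noteq> 0" using ne by (simp add: phi_j_def \<eta>_def Let_def)
  have n\<eta>: "norm \<eta> = 2 powr (- real_of_int j) * norm \<xi>" by (simp add: \<eta>_def)
  have nh: "norm ((1/2) *\<^sub>R \<eta>) = norm \<eta> / 2" by simp
  have c1: "\<And>x. norm x \<ge> 4/3 \<Longrightarrow> chi x = 0" and c2: "\<And>x. norm x \<le> 3/4 \<Longrightarrow> chi x = 1"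
    using chi by (auto simp: admissible_chi_def)
  have lo: "norm \<eta> > 3/4"
  proof (rule ccontr)
    assume "\<not> norm \<eta> > 3/4"
    hence "chi \<eta> = 1" "chi ((1/2) *\<^sub>R \<eta>) = 1" using c2 nh by auto
    with ne' show False by simp
  qed
  have hi: "norm \<eta> < 8/3"
  proof (rule ccontr)
    assume "\<not> norm \<eta> < 8/3"
    hence "chi \<eta> = 0" "chi ((1/2) *\<^sub>R \<eta>) = 0" using c1 nh by auto
    with ne' show False by simp
  qed
  have e: "2 powr (real_of_int j) * 2 powr (- real_of_int j) = 1" by (simp add: powr_add[symmetric])
  have "3/4 * 2 powr j < 2 powr j * norm \<eta>" using lo by simp
  moreover have "2 powr j * norm \<eta> < 8/3 * 2 powr j" using hi by simp
  moreover have "2 powr j * norm \<eta> = norm \<xi>" using e by (simp add: n\<eta> mult.assoc[symmetric])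
  ultimately show ?thesis by simp
qed

lemma chi_meas:
  assumes "admissible_chi chi"
  shows "chi \<in> borel_measurable borel"
proof -
  have "smooth3 chi" using assms by (simp add: admissible_chi_def)
  hence "chi differentiable_on UNIV" by (cases rule: smooth3.cases) auto
  hence "continuous_on UNIV chi" by (rule differentiable_imp_continuous_on)
  thus ?thesis by (rule borel_measurable_continuous_onI)
qed

lemma phi_meas:
  assumes "admissible_chi chi"
  shows "phi_j chi j \<in> borel_measurable lborel"
proof -
  note cm[measurable] = chi_meas[OF assms]
  show ?thesis unfolding phi_j_def[abs_def] Let_def by measurable
qed




lemma infsum_cmult_ennreal_le:
  fixes N :: "'a \<Rightarrow> ennreal"
  shows "(\<Sum>\<^sub>\<infinity> j. c * N j) \<le> c * (\<Sum>\<^sub>\<infinity> j. N j)"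
proof -
  have "(\<Sum>\<^sub>\<infinity> j. c * N j) = (SUP F\<in>{F. finite F \<and> F \<subseteq> UNIV}. sum (\<lambda>j. c * N j) F)"
    by (rule nonneg_infsum_complete) simp
  also have "\<dots> \<le> c * (\<Sum>\<^sub>\<infinity> j. N j)"
  proof (rule SUP_least)
    fix F :: "'a set" assume F: "F \<in> {F. finite F \<and> F \<subseteq> UNIV}"
    have "sum N F = infsum N F" using F by simp
    also have "\<dots> \<le> infsum N UNIV"
      by (rule infsum_mono_neutral) (auto simp: nonneg_summable_on_complete)
    finally have "sum N F \<le> infsum N UNIV" .
    hence "c * sum N F \<le> c * infsum N UNIV" by (rule mult_left_mono) simp
    thus "sum (\<lambda>j. c * N j) F \<le> c * (\<Sum>\<^sub>\<infinity> j. N j)" by (simp add: sum_distrib_left)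
  qed
  finally show ?thesis .
qed

lemma decay:
  assumes chi: "admissible_chi chi" and t: "t \<ge> 0"
  shows "exp (- t * (norm \<xi>)\<^sup>2) * \<bar>phi_j chi j \<xi>\<bar> \<le> exp (- (9/16 * 2 powr (2*j)) * t) * \<bar>phi_j chi j \<xi>\<bar>"
proof (cases "phi_j chi j \<xi> = 0")
  case False
  hence lo: "3/4 * 2 powr j < norm \<xi>" using phi_supp[OF chi] by blast
  have A: "(3/4 * 2 powr j)^2 \<le> (norm \<xi>)^2" using lo by (intro power_mono) auto
  have B: "(3/4 * 2 powr j)^2 = 9/16 * 2 powr (2*j)"
  proof -
    have "(2 powr j)^2 = (2 powr j) powr 2" by simp
    also have "\<dots> = 2 powr (2*j)" by (simp add: powr_powr mult.commute)
    finally have h: "(2 powr j)^2 = 2 powr (2*j)" .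
    have "(3/4 * 2 powr j)^2 = 9/16 * (2 powr j)^2" by (simp add: power2_eq_square)
    also have "\<dots> = 9/16 * 2 powr (2*j)" using h by simp
    finally show ?thesis .
  qed
  have "9/16 * 2 powr (2*j) \<le> (norm \<xi>)\<^sup>2" using A B by linarith
  hence "9/16 * 2 powr (2*j) * t \<le> (norm \<xi>)\<^sup>2 * t" using t by (rule mult_right_mono)
  hence "- t * (norm \<xi>)\<^sup>2 \<le> - (9/16 * 2 powr (2*j)) * t" by (simp add: algebra_simps)
  hence "exp (- t * (norm \<xi>)\<^sup>2) \<le> exp (- (9/16 * 2 powr (2*j)) * t)" by simp
  thus ?thesis by (intro mult_right_mono) auto
qed simp


theorem lemma4p1:
  fixes chi p :: "real^3 \<Rightarrow> real" and \<rho> :: ereal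
  assumes "admissible_chi chi"
    and "P0_log p"
    and "2 \<le> ess_inf_exp p"
    and "ess_sup_exp p \<le> 6"
    and "1 \<le> \<rho>"
  shows "\<exists>C>0. \<forall>F :: real^3 \<Rightarrow> complex. F \<in> borel_measurable lborel
           \<and> FB_var_norm chi (\<lambda>\<xi>. 2 - 3 / p \<xi>) p F < top \<longrightarrow>
           X_norm chi \<rho> p (\<lambda>t. heat_hat t F) \<le> ennreal C * FB_var_norm chi (\<lambda>\<xi>. 2 - 3 / p \<xi>) p F"
proof -
  note chi = assms(1)
  have P0: "P0 p" using assms(2) by (simp add: P0_log_def)
  hence pm: "p \<in> borel_measurable lborel" and p1: "\<And>x. 1 \<le> p x" by (auto simp: P0_def)
  have p0: "\<And>x. 0 \<le> p x" using p1 by (smt (verit))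
  have p2: "AE \<xi> in lborel. 2 \<le> p \<xi>" using assms(3) by (rule ess_inf_AE)
  note phim[measurable] = phi_meas[OF chi]
  note pmm[measurable] = pm
  define S where "S = sqrt (1 + 4096/27 :: real)"
  have S1: "S \<ge> 1" by (simp add: S_def)
  define C where "C = 16/9 * S"
  have C0: "C > 0" using S1 by (simp add: C_def)
  show ?thesis
  proof (intro exI[of _ C] conjI allI impI C0)
    fix F :: "real^3 \<Rightarrow> complex"
    assume "F \<in> borel_measurable lborel \<and> FB_var_norm chi (\<lambda>\<xi>. 2 - 3 / p \<xi>) p F < top"
    hence Fm[measurable]: "F \<in> borel_measurable lborel" by simp
    define G where "G j \<xi> = complex_of_real (2 powr (real_of_int j * (2 - 3 / p \<xi>)) * phi_j chi j \<xi>) * F \<xi>"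
      for j :: int and \<xi>
    define N where "N j = Lvar_norm p (G j)" for j
    have FB: "FB_var_norm chi (\<lambda>\<xi>. 2 - 3 / p \<xi>) p F = (\<Sum>\<^sub>\<infinity> j. N j)"
      unfolding FB_var_norm_def N_def G_def by simp
    have Gm: "G j \<in> borel_measurable lborel" for j
      unfolding G_def[abs_def] by measurable
    have Ncases: "N j = top \<or> (\<exists>n. N j = ennreal n \<and> 0 \<le> n)" for j
      by (cases "N j") auto

    have T1: "Lrho_time \<rho> (\<lambda>t. Lvar_norm p (\<lambda>\<xi>. complex_of_real (2 powr (real_of_int j *
                 (2 - 3 / p \<xi> + real_of_ereal (2 / \<rho>))) * phi_j chi j \<xi>) * heat_hat t F \<xi>))
              \<le> ennreal (16/9) * N j" for j
    proof (cases "N j = top")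
      case True thus ?thesis by (simp add: ennreal_mult_top)
    next
      case False
      then obtain n where n: "N j = ennreal n" "0 \<le> n" using Ncases by blast
      define d where "d = real_of_ereal (2 / \<rho>)"
      have "Lrho_time \<rho> (\<lambda>t. Lvar_norm p (\<lambda>\<xi>. complex_of_real (2 powr (real_of_int j *
                 (2 - 3 / p \<xi> + real_of_ereal (2 / \<rho>))) * phi_j chi j \<xi>) * heat_hat t F \<xi>))
            \<le> ennreal (16/9 * 2 powr (- j * real_of_ereal (2/\<rho>)) * (2 powr (j * d) * n))"
      proof (rule time_bound[OF assms(5)])
        show "0 \<le> 2 powr (j * d) * n" using n by simp
        fix t :: real assume t: "t > 0"
        have "Lvar_norm p (\<lambda>\<xi>. complex_of_real (2 powr (real_of_int j *
                 (2 - 3 / p \<xi> + real_of_ereal (2 / \<rho>))) * phi_j chi j \<xi>) * heat_hat t F \<xi>)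
              \<le> ennreal (exp (- (9/16 * 2 powr (2*j)) * t) * 2 powr (j * d)) * N j"
          unfolding N_def
        proof (rule Lvar_scale[OF p0])
          show "0 < exp (- (9/16 * 2 powr (2*j)) * t) * 2 powr (j * d)" by simp
          fix \<xi>
          define A where "A = 2 powr (real_of_int j * (2 - 3 / p \<xi>))"
          define B where "B = 2 powr (j * d)"
          have AB: "2 powr (real_of_int j * (2 - 3 / p \<xi> + real_of_ereal (2 / \<rho>))) = A * B"
            unfolding A_def B_def d_def by (simp add: distrib_left powr_add)
          have e: "exp (- t * (norm \<xi>)\<^sup>2) * \<bar>phi_j chi j \<xi>\<bar> \<le> exp (- (9/16 * 2 powr (2*j)) * t) * \<bar>phi_j chi j \<xi>\<bar>"
            using decay[OF chi, of t] t by simp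
          have "norm (complex_of_real (2 powr (real_of_int j *
                 (2 - 3 / p \<xi> + real_of_ereal (2 / \<rho>))) * phi_j chi j \<xi>) * heat_hat t F \<xi>)
              = (A * B * norm (F \<xi>)) * (exp (- t * (norm \<xi>)\<^sup>2) * \<bar>phi_j chi j \<xi>\<bar>)"
            unfolding heat_hat_def AB by (simp add: norm_mult abs_mult A_def B_def)
          also have "\<dots> \<le> (A * B * norm (F \<xi>)) * (exp (- (9/16 * 2 powr (2*j)) * t) * \<bar>phi_j chi j \<xi>\<bar>)"
            using e by (intro mult_left_mono) (auto simp: A_def B_def)
          also have "\<dots> = exp (- (9/16 * 2 powr (2*j)) * t) * 2 powr (j * d) * norm (G j \<xi>)"
            unfolding G_def by (simp add: norm_mult abs_mult A_def B_def)
          finally show "norm (complex_of_real (2 powr (real_of_int j *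
                 (2 - 3 / p \<xi> + real_of_ereal (2 / \<rho>))) * phi_j chi j \<xi>) * heat_hat t F \<xi>)
              \<le> exp (- (9/16 * 2 powr (2*j)) * t) * 2 powr (j * d) * norm (G j \<xi>)" .
        qed
        also have "\<dots> = ennreal (exp (- (9/16 * 2 powr (2*j)) * t) * (2 powr (j * d) * n))"
          using n by (simp add: ennreal_mult mult.assoc)
        finally show "Lvar_norm p (\<lambda>\<xi>. complex_of_real (2 powr (real_of_int j *
                 (2 - 3 / p \<xi> + real_of_ereal (2 / \<rho>))) * phi_j chi j \<xi>) * heat_hat t F \<xi>)
              \<le> ennreal (exp (- (9/16 * 2 powr (2*j)) * t) * (2 powr (j * d) * n))" .
      qed
      also have "16/9 * 2 powr (- j * real_of_ereal (2/\<rho>)) * (2 powr (j * d) * n) = 16/9 * n"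
        unfolding d_def by (simp add: powr_add[symmetric])
      also have "ennreal (16/9 * n) = ennreal (16/9) * N j"
        unfolding n(1) using n(2) by (intro ennreal_mult) auto
      finally show ?thesis .
    qed
    have T1s: "LFB_var_norm chi \<rho> (\<lambda>\<xi>. 2 - 3 / p \<xi> + real_of_ereal (2 / \<rho>)) p (\<lambda>t. heat_hat t F)
               \<le> ennreal C * FB_var_norm chi (\<lambda>\<xi>. 2 - 3 / p \<xi>) p F"
    proof -
      have "LFB_var_norm chi \<rho> (\<lambda>\<xi>. 2 - 3 / p \<xi> + real_of_ereal (2 / \<rho>)) p (\<lambda>t. heat_hat t F)
            \<le> (\<Sum>\<^sub>\<infinity> j. ennreal (16/9) * N j)"
        unfolding LFB_var_norm_def by (intro infsum_mono T1 nonneg_summable_on_complete) auto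
      also have "\<dots> \<le> ennreal (16/9) * (\<Sum>\<^sub>\<infinity> j. N j)" by (rule infsum_cmult_ennreal_le)
      also have "\<dots> \<le> ennreal C * (\<Sum>\<^sub>\<infinity> j. N j)"
        using S1 by (intro mult_right_mono ennreal_leI) (auto simp: C_def)
      finally show ?thesis using FB by simp
    qed

    have L2t: "Lp_norm 2 (\<lambda>\<xi>. complex_of_real (phi_j chi j \<xi>) * heat_hat t F \<xi>)
               \<le> ennreal (exp (- (9/16 * 2 powr (2*j)) * t) * 2 powr (- j/2) * S) * N j"
      if t: "t > 0" for j :: int and t :: real
    proof -
      define R0 where "R0 = 8/3 * 2 powr j"
      define R where "R = (\<chi> i::3. R0)"
      define a where "a = 2 powr (- 3 * j)"
      define k where "k = exp (- (9/16 * 2 powr (2*j)) * t) * 2 powr (- j/2)"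
      have a0: "a > 0" and k0: "k > 0" by (auto simp: a_def k_def)
      have R00: "R0 > 0" by (simp add: R0_def)
      have "R \<in> cbox (-R) R" using R00 by (simp add: mem_box_cart R_def)
      hence cne: "cbox (-R) R \<noteq> {}" by blast
      have mA: "emeasure lborel (cbox (-R) R) = ennreal ((2*R0)^3)"
      proof -
        have "emeasure lborel (cbox (-R) R) = ennreal (measure lborel (cbox (-R) R))"
          using emeasure_lborel_cbox_finite[of "-R" R] by (intro emeasure_eq_ennreal_measure) auto
        also have "measure lborel (cbox (-R) R) = (2*R0)^3"
          using cne by (simp add: content_cbox_cart R_def)
        finally show ?thesis .
      qed
      have amK: "a * (2*R0)^3 \<le> 4096/27"
      proof -
        have "(2 powr j)^3 = 2 powr (3*j)"
        proof -
          have "(2 powr j)^3 = (2 powr j) powr 3" by simp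
          also have "\<dots> = 2 powr (3*j)" by (simp add: powr_powr mult.commute)
          finally show ?thesis .
        qed
        have "(2*R0)^3 = 4096/27 * (2 powr j)^3"
          unfolding R0_def power3_eq_cube by (simp add: field_simps)
        hence "a * (2*R0)^3 = 4096/27 * (2 powr (- 3 * j) * 2 powr (3*j))"
          using \<open>(2 powr j)^3 = 2 powr (3*j)\<close> by (simp add: a_def)
        also have "\<dots> = 4096/27" by (simp add: powr_add[symmetric])
        finally show ?thesis by simp
      qed
      have "Lp_norm 2 (\<lambda>\<xi>. complex_of_real (phi_j chi j \<xi>) * heat_hat t F \<xi>)
            \<le> ennreal (k * sqrt (1 + 4096/27)) * Lvar_norm p (G j)"
      proof (rule L2_bound[OF pm p2 Gm a0 k0 _ _ _ _ mA _ amK])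
        show "0 \<le> (4096/27::real)" by simp
        show "cbox (-R) R \<in> sets lborel" by simp
        show "0 \<le> (2*R0)^3" using R00 by simp
        fix \<xi>
        show "G j \<xi> \<noteq> 0 \<Longrightarrow> \<xi> \<in> cbox (-R) R"
        proof -
          assume "G j \<xi> \<noteq> 0"
          hence "phi_j chi j \<xi> \<noteq> 0" by (auto simp: G_def)
          hence "norm \<xi> < R0" using phi_supp[OF chi] by (auto simp: R0_def)
          hence "\<bar>\<xi>$i\<bar> \<le> R0" for i using component_le_norm_cart[of \<xi> i] by simp
          hence "- R0 \<le> \<xi>$i \<and> \<xi>$i \<le> R0" for i by (simp add: abs_le_iff) (smt (verit))
          thus "\<xi> \<in> cbox (-R) R" by (simp add: mem_box_cart R_def)
        qed
        define E where "E = exp (- (9/16 * 2 powr (2*j)) * t)"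
        have pw: "k * a powr (1/2 - 1/p \<xi>) * 2 powr (real_of_int j * (2 - 3 / p \<xi>)) = E"
        proof -
          define X where "X = - real_of_int j/2"
          define Y where "Y = - 3 * real_of_int j * (1/2 - 1/p \<xi>)"
          define Z where "Z = real_of_int j * (2 - 3 / p \<xi>)"
          have ha: "a powr (1/2 - 1/p \<xi>) = 2 powr Y"
            by (simp add: a_def Y_def powr_powr)
          have hk: "k = E * 2 powr X" by (simp add: k_def E_def X_def)
          have h3: "2 powr X * 2 powr Y * 2 powr Z = 2 powr (X+Y+Z)" by (simp only: powr_add)
          have h0: "X+Y+Z = 0" by (simp add: X_def Y_def Z_def algebra_simps)
          have "k * a powr (1/2 - 1/p \<xi>) * 2 powr (real_of_int j * (2 - 3 / p \<xi>))
                = E * (2 powr X * 2 powr Y * 2 powr Z)"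
            unfolding ha hk Z_def by (simp add: mult.assoc)
          also have "\<dots> = E" unfolding h3 h0 by simp
          finally show ?thesis .
        qed
        have e: "exp (- t * (norm \<xi>)\<^sup>2) * \<bar>phi_j chi j \<xi>\<bar> \<le> E * \<bar>phi_j chi j \<xi>\<bar>"
          using decay[OF chi, of t] t by (simp add: E_def)
        have "norm (complex_of_real (phi_j chi j \<xi>) * heat_hat t F \<xi>)
              = norm (F \<xi>) * (exp (- t * (norm \<xi>)\<^sup>2) * \<bar>phi_j chi j \<xi>\<bar>)"
          unfolding heat_hat_def by (simp add: norm_mult)
        also have "\<dots> \<le> norm (F \<xi>) * (E * \<bar>phi_j chi j \<xi>\<bar>)"
          using e by (intro mult_left_mono) auto
        also have "\<dots> = (k * a powr (1/2 - 1/p \<xi>) * 2 powr (real_of_int j * (2 - 3 / p \<xi>))) * \<bar>phi_j chi j \<xi>\<bar> * norm (F \<xi>)"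
          using pw by simp
        also have "\<dots> = k * (a powr (1/2 - 1/p \<xi>) * norm (G j \<xi>))"
          unfolding G_def by (simp add: norm_mult abs_mult)
        finally show "norm (complex_of_real (phi_j chi j \<xi>) * heat_hat t F \<xi>) \<le> k * (a powr (1/2 - 1/p \<xi>) * norm (G j \<xi>))" .
      qed
      thus ?thesis by (simp add: N_def k_def S_def)
    qed

    have T2: "ennreal (2 powr (real_of_int j * (5/2))) * Lrho_time 1 (\<lambda>t. Lp_norm 2 (\<lambda>\<xi>. complex_of_real (phi_j chi j \<xi>) * heat_hat t F \<xi>))
              \<le> ennreal C * N j" for j
    proof (cases "N j = top")
      case True thus ?thesis using C0 by (simp add: ennreal_mult_top)
    next
      case False
      then obtain n where n: "N j = ennreal n" "0 \<le> n" using Ncases by blast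
      have "Lrho_time 1 (\<lambda>t. Lp_norm 2 (\<lambda>\<xi>. complex_of_real (phi_j chi j \<xi>) * heat_hat t F \<xi>))
            \<le> ennreal (16/9 * 2 powr (- j * real_of_ereal (2/1)) * (2 powr (- j/2) * S * n))"
      proof (rule time_bound)
        show "0 \<le> 2 powr (- j/2) * S * n" using n S1 by simp
        fix t :: real assume t: "t > 0"
        show "Lp_norm 2 (\<lambda>\<xi>. complex_of_real (phi_j chi j \<xi>) * heat_hat t F \<xi>)
              \<le> ennreal (exp (- (9/16 * 2 powr (2*j)) * t) * (2 powr (- j/2) * S * n))"
          using L2t[OF t, of j] n S1 by (simp add: ennreal_mult[symmetric] mult.assoc)
      qed simp
      hence "ennreal (2 powr (real_of_int j * (5/2))) * Lrho_time 1 (\<lambda>t. Lp_norm 2 (\<lambda>\<xi>. complex_of_real (phi_j chi j \<xi>) * heat_hat t F \<xi>))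
            \<le> ennreal (2 powr (real_of_int j * (5/2))) * ennreal (16/9 * 2 powr (- j * real_of_ereal (2/1)) * (2 powr (- j/2) * S * n))"
        by (rule mult_left_mono) simp
      also have "\<dots> = ennreal (16/9 * S * n * (2 powr (real_of_int j * (5/2)) * 2 powr (- j * 2) * 2 powr (- j/2)))"
        using n S1 by (simp add: ennreal_mult[symmetric] algebra_simps)
      also have "2 powr (real_of_int j * (5/2)) * 2 powr (- j * 2) * 2 powr (- j/2) = 1"
        by (simp add: powr_add[symmetric])
      also have "ennreal (16/9 * S * n * 1) = ennreal (C * n)" by (simp add: C_def)
      also have "\<dots> = ennreal C * N j" unfolding n(1) using n(2) C0 by (intro ennreal_mult) auto
      finally show ?thesis .
    qed

    have T3: "ennreal (2 powr (real_of_int j * (1/2))) * Lrho_time \<infinity> (\<lambda>t. Lp_norm 2 (\<lambda>\<xi>. complex_of_real (phi_j chi j \<xi>) * heat_hat t F \<xi>))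
              \<le> ennreal C * N j" for j
    proof (cases "N j = top")
      case True thus ?thesis using C0 by (simp add: ennreal_mult_top)
    next
      case False
      then obtain n where n: "N j = ennreal n" "0 \<le> n" using Ncases by blast
      have "Lrho_time \<infinity> (\<lambda>t. Lp_norm 2 (\<lambda>\<xi>. complex_of_real (phi_j chi j \<xi>) * heat_hat t F \<xi>))
            \<le> ennreal (16/9 * 2 powr (- j * real_of_ereal (2/\<infinity>)) * (2 powr (- j/2) * S * n))"
      proof (rule time_bound)
        show "0 \<le> 2 powr (- j/2) * S * n" using n S1 by simp
        fix t :: real assume t: "t > 0"
        show "Lp_norm 2 (\<lambda>\<xi>. complex_of_real (phi_j chi j \<xi>) * heat_hat t F \<xi>)
              \<le> ennreal (exp (- (9/16 * 2 powr (2*j)) * t) * (2 powr (- j/2) * S * n))"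
          using L2t[OF t, of j] n S1 by (simp add: ennreal_mult[symmetric] mult.assoc)
      qed simp
      hence "ennreal (2 powr (real_of_int j * (1/2))) * Lrho_time \<infinity> (\<lambda>t. Lp_norm 2 (\<lambda>\<xi>. complex_of_real (phi_j chi j \<xi>) * heat_hat t F \<xi>))
            \<le> ennreal (2 powr (real_of_int j * (1/2))) * ennreal (16/9 * 2 powr (- j * real_of_ereal (2/\<infinity>)) * (2 powr (- j/2) * S * n))"
        by (rule mult_left_mono) simp
      also have "\<dots> = ennreal (16/9 * S * n * (2 powr (real_of_int j * (1/2)) * 2 powr (- j/2)))"
        using n S1 by (simp add: ennreal_mult[symmetric] algebra_simps)
      also have "2 powr (real_of_int j * (1/2)) * 2 powr (- j/2) = 1"
        by (simp add: powr_add[symmetric])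
      also have "ennreal (16/9 * S * n * 1) = ennreal (C * n)" by (simp add: C_def)
      also have "\<dots> = ennreal C * N j" unfolding n(1) using n(2) C0 by (intro ennreal_mult) auto
      finally show ?thesis .
    qed

    have T2s: "LFB_norm chi 1 (5/2) 2 (\<lambda>t. heat_hat t F) \<le> ennreal C * FB_var_norm chi (\<lambda>\<xi>. 2 - 3 / p \<xi>) p F"
    proof -
      have "LFB_norm chi 1 (5/2) 2 (\<lambda>t. heat_hat t F) \<le> (\<Sum>\<^sub>\<infinity> j. ennreal C * N j)"
        unfolding LFB_norm_def by (intro infsum_mono T2 nonneg_summable_on_complete) auto
      also have "\<dots> \<le> ennreal C * (\<Sum>\<^sub>\<infinity> j. N j)" by (rule infsum_cmult_ennreal_le)
      finally show ?thesis using FB by simp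
    qed
    have T3s: "LFB_norm chi \<infinity> (1/2) 2 (\<lambda>t. heat_hat t F) \<le> ennreal C * FB_var_norm chi (\<lambda>\<xi>. 2 - 3 / p \<xi>) p F"
    proof -
      have "LFB_norm chi \<infinity> (1/2) 2 (\<lambda>t. heat_hat t F) \<le> (\<Sum>\<^sub>\<infinity> j. ennreal C * N j)"
        unfolding LFB_norm_def by (intro infsum_mono T3 nonneg_summable_on_complete) auto
      also have "\<dots> \<le> ennreal C * (\<Sum>\<^sub>\<infinity> j. N j)" by (rule infsum_cmult_ennreal_le)
      finally show ?thesis using FB by simp
    qed
    show "X_norm chi \<rho> p (\<lambda>t. heat_hat t F) \<le> ennreal C * FB_var_norm chi (\<lambda>\<xi>. 2 - 3 / p \<xi>) p F"
      unfolding X_norm_def using T1s T2s T3s by simp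
  qed
qed


end
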